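(* Let $k\ge1$. In base $2$, among all odd $k$-digit numbers $n$ (i.e. odd $n$ with $2^{k-1}\le n<2^k$), $d_2(n)$ has a unique maximum at $n=2^k-1$ (binary $11\ldots1$).
   Context: Base-$2$ lunar product: for $x=\sum_ix_i2^i$, $y=\sum_jy_j2^j$ with binary digits $x_i,y_j\in\{0,1\}$, $x\otimes y=\sum_n(\max_{i+j=n}\min(x_i,y_j))2^n$. For a positive integer $n$, $d_2(n)$ is the number of positive integers $m$ such that $m\otimes q=n$ for some integer $q$. *)

theory Defs
  imports Main
begin

definition bdigit :: "nat \<Rightarrow> nat \<Rightarrow> nat" where
  "bdigit x i = x div 2 ^ i mod 2"

(* base-2 lunar product: digit n of x \<otimes> y is max over i+j=n of min(x_i, y_j).
   Digits vanish for indices > x (resp. > y), so n ranges over n \<le> x + y. *)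
definition lunar_mult :: "nat \<Rightarrow> nat \<Rightarrow> nat" where
  "lunar_mult x y =
     (\<Sum>n\<le>x + y. Max ((\<lambda>i. min (bdigit x i) (bdigit y (n - i))) ` {0..n}) * 2 ^ n)"

definition d2 :: "nat \<Rightarrow> nat" where
  "d2 n = card {m::nat. 0 < m \<and> (\<exists>q. lunar_mult m q = n)}"

end

theory Submission
  imports Defs
begin

lemma bdigit_bit: "bdigit x i = (if bit x i then 1 else 0)"
  unfolding bdigit_def bit_iff_odd by (auto simp: odd_iff_mod_2_eq_one even_iff_mod_2_eq_zero)

lemma bit_add_high:
  fixes x c :: nat
  assumes "x < 2 ^ m"
  shows "bit (x + c * 2 ^ m) t \<longleftrightarrow> (if t < m then bit x t else bit c (t - m))"
proof (cases "t < m")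
  case True
  have "(x + c * 2 ^ m) div 2 ^ t = x div 2 ^ t + c * 2 ^ (m - t)"
  proof -
    have "c * 2 ^ m = (c * 2 ^ (m - t)) * 2 ^ t" using True
      by (simp add: power_add[symmetric])
    then have "(x + c * 2 ^ m) div 2 ^ t = (x + (c * 2 ^ (m - t)) * 2 ^ t) div 2 ^ t" by metis
    also have "\<dots> = x div 2 ^ t + c * 2 ^ (m - t)" by simp
    finally show ?thesis .
  qed
  moreover have "even (c * 2 ^ (m - t))" using True by simp
  ultimately show ?thesis using True by (simp add: bit_iff_odd)
next
  case False
  have "(x + c * 2 ^ m) div 2 ^ t = ((x + c * 2 ^ m) div 2 ^ m) div 2 ^ (t - m)"
    using False by (metis div_exp_eq le_add_diff_inverse not_less)
  also have "(x + c * 2 ^ m) div 2 ^ m = c" using assms by simp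
  finally show ?thesis using False by (simp add: bit_iff_odd)
qed

lemma sum_lt: fixes c :: "nat \<Rightarrow> nat"
  assumes "\<And>n. c n \<le> 1"
  shows "(\<Sum>n<N. c n * 2 ^ n) < 2 ^ N"
proof (induction N)
  case 0 then show ?case by simp
next
  case (Suc N)
  have "(\<Sum>n<Suc N. c n * 2 ^ n) = (\<Sum>n<N. c n * 2 ^ n) + c N * 2 ^ N" by simp
  also have "\<dots> < 2 ^ N + 1 * 2 ^ N" using Suc assms[of N]
    by (meson add_less_le_mono mult_le_mono1)
  finally show ?case by simp
qed

lemma bit_sum:
  fixes c :: "nat \<Rightarrow> nat"
  assumes "\<And>n. c n \<le> 1"
  shows "bit (\<Sum>n<N. c n * 2 ^ n) t \<longleftrightarrow> t < N \<and> c t = 1"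
proof (induction N)
  case 0 then show ?case by simp
next
  case (Suc N)
  have e: "(\<Sum>n<Suc N. c n * 2 ^ n) = (\<Sum>n<N. c n * 2 ^ n) + c N * 2 ^ N" by simp
  have c01: "c N = 0 \<or> c N = 1" using assms[of N] by auto
  show ?case unfolding e bit_add_high[OF sum_lt[OF assms]] using Suc c01
    by (cases "t < N"; cases "t = N") (auto simp: bit_1_iff bit_Suc_0_iff)
qed

lemma bit_sum_atMost:
  fixes c :: "nat \<Rightarrow> nat"
  assumes "\<And>n. c n \<le> 1"
  shows "bit (\<Sum>n\<le>N. c n * 2 ^ n) t \<longleftrightarrow> t \<le> N \<and> c t = 1"
proof -
  have "bit (\<Sum>n<Suc N. c n * 2 ^ n) t \<longleftrightarrow> t < Suc N \<and> c t = 1" by (rule bit_sum[OF assms])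
  then show ?thesis by (simp add: lessThan_Suc_atMost less_Suc_eq_le)
qed

lemma bit_lt: fixes x :: nat assumes "bit x i" shows "i < x"
proof -
  have "x div 2 ^ i \<noteq> 0" using assms by (metis bit_iff_odd dvd_0_right)
  then have "2 ^ i \<le> x" by (simp add: div_eq_0_iff)
  moreover have "i < 2 ^ i" by simp
  ultimately show ?thesis by linarith
qed

lemma max_eq: "Max ((\<lambda>i. min (bdigit x i) (bdigit y (n - i))) ` {0..n}) =
   (if \<exists>i\<le>n. bit x i \<and> bit y (n - i) then 1 else 0)"
proof (cases "\<exists>i\<le>n. bit x i \<and> bit y (n - i)")
  case True
  then obtain i where i: "i \<le> n" "bit x i" "bit y (n - i)" by blast
  have "Max ((\<lambda>i. min (bdigit x i) (bdigit y (n - i))) ` {0..n}) = 1"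
    apply (rule Max_eqI)
    using i by (auto simp: bdigit_bit intro!: image_eqI[of _ _ i])
  then show ?thesis using True by simp
next
  case False
  then have "(\<lambda>i. min (bdigit x i) (bdigit y (n - i))) ` {0..n} = {0}"
    by (auto simp: bdigit_bit intro!: image_eqI[of _ _ 0])
  then show ?thesis using False by simp
qed

lemma bit_lunar: "bit (lunar_mult x y) t \<longleftrightarrow> (\<exists>i j. bit x i \<and> bit y j \<and> t = i + j)"
proof -
  have "bit (lunar_mult x y) t \<longleftrightarrow> t \<le> x + y \<and> (\<exists>i\<le>t. bit x i \<and> bit y (t - i))"
    unfolding lunar_mult_def max_eq by (subst bit_sum_atMost) auto
  also have "\<dots> \<longleftrightarrow> (\<exists>i j. bit x i \<and> bit y j \<and> t = i + j)"
  proof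
    assume "t \<le> x + y \<and> (\<exists>i\<le>t. bit x i \<and> bit y (t - i))"
    then show "\<exists>i j. bit x i \<and> bit y j \<and> t = i + j" by (metis le_add_diff_inverse)
  next
    assume "\<exists>i j. bit x i \<and> bit y j \<and> t = i + j"
    then obtain i j where "bit x i" "bit y j" "t = i + j" by blast
    moreover have "i < x" "j < y" using bit_lt \<open>bit x i\<close> \<open>bit y j\<close> by auto
    ultimately show "t \<le> x + y \<and> (\<exists>i\<le>t. bit x i \<and> bit y (t - i))" by (auto intro!: exI[of _ i])
  qed
  finally show ?thesis .
qed


lemma bit_mask_nat: "bit ((2::nat) ^ k - 1) t \<longleftrightarrow> t < k"
  using bit_mask_iff[of k t, where 'a=nat] by (simp add: mask_eq_exp_minus_1)

lemma bits_lt_k: fixes n :: nat assumes "n < 2 ^ k" "bit n t" shows "t < k"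
proof (rule ccontr)
  assume "\<not> t < k"
  then have "(2::nat) ^ k \<le> 2 ^ t" by simp
  then have "n < 2 ^ t" by (rule less_le_trans[OF assms(1)])
  then have "n div 2 ^ t = 0" by (rule div_less)
  then show False using assms(2) by (simp add: bit_iff_odd)
qed

lemma less_pow_if: fixes m :: nat assumes "\<And>t. bit m t \<Longrightarrow> t < k" shows "m < 2 ^ k"
proof -
  have "m = take_bit k m"
    by (rule bit_eqI) (auto simp: bit_take_bit_iff assms)
  then show ?thesis by (metis take_bit_nat_less_exp)
qed

definition Mset :: "nat \<Rightarrow> nat set" where
  "Mset N = {m. 0 < m \<and> (\<exists>q. lunar_mult m q = N)}"

lemma d2_Mset: "d2 N = card (Mset N)" by (simp add: d2_def Mset_def)

lemma FD:
  fixes x :: nat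
  assumes "a < k" "\<And>t. bit x t \<Longrightarrow> t \<le> a" "bit x 0"
    "\<And>t. t < k \<Longrightarrow> \<exists>i j. bit x i \<and> j \<le> k - 1 - a \<and> t = i + j"
  shows "x \<in> Mset (2 ^ k - 1)"
proof -
  have "x \<noteq> 0" using assms(3) by (auto simp: bit_0 odd_pos)
  moreover have "lunar_mult x (2 ^ (k - a) - 1) = 2 ^ k - 1"
  proof (rule bit_eqI)
    fix t
    show "bit (lunar_mult x (2 ^ (k - a) - 1)) t = bit ((2::nat) ^ k - 1) t"
      unfolding bit_lunar bit_mask_nat
    proof
      assume "\<exists>i j. bit x i \<and> j < k - a \<and> t = i + j"
      then obtain i j where "bit x i" "j < k - a" "t = i + j" by blast
      with assms(2)[of i] show "t < k" by auto
    next
      assume "t < k"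
      from assms(4)[OF this] obtain i j where "bit x i" "j \<le> k - 1 - a" "t = i + j" by blast
      then show "\<exists>i j. bit x i \<and> j < k - a \<and> t = i + j" using assms(1) by (intro exI[of _ i] exI[of _ j]) auto
    qed
  qed
  ultimately show ?thesis unfolding Mset_def by auto
qed

definition G :: "nat \<Rightarrow> nat \<Rightarrow> nat" where
  "G n m = (\<Sum>i\<le>Max {i. bit m i}. (if bit m i \<or> \<not> bit n i then 1 else 0) * 2 ^ i)"

lemma bit_G: "bit (G n m) t \<longleftrightarrow> t \<le> Max {i. bit m i} \<and> (bit m t \<or> \<not> bit n t)"
  unfolding G_def by (subst bit_sum_atMost) auto

lemma per_m:
  fixes n m :: nat
  assumes "odd n" "n < 2 ^ k" "m \<in> Mset n"
  shows "G n m \<in> Mset (2 ^ k - 1)"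
    and "\<And>t. bit m t \<longleftrightarrow> bit (G n m) t \<and> bit n t"
    and "bit m (Max {i. bit m i}) \<and> (\<forall>t. bit m t \<longrightarrow> t \<le> Max {i. bit m i})"
proof -
  obtain q where q: "lunar_mult m q = n" using assms(3) unfolding Mset_def by auto
  have nb: "bit n t \<longleftrightarrow> (\<exists>i j. bit m i \<and> bit q j \<and> t = i + j)" for t
    using q bit_lunar by metis
  have n0: "bit n 0" using assms(1) by (simp add: bit_0)
  have m0: "bit m 0" and q0: "bit q 0" using nb[of 0] n0 by auto
  have mn: "bit m i \<Longrightarrow> bit n i" for i using nb[of i] q0 by auto
  define a where "a = Max {i. bit m i}"
  have fin: "finite {i. bit m i}"
    by (rule finite_subset[of _ "{..<m}"]) (auto simp: bit_lt)
  have ma: "bit m a" unfolding a_def using fin m0 by (metis (mono_tags) Max_in empty_iff mem_Collect_eq)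
  have le_a: "bit m t \<Longrightarrow> t \<le> a" for t unfolding a_def using fin by auto
  show "bit m (Max {i. bit m i}) \<and> (\<forall>t. bit m t \<longrightarrow> t \<le> Max {i. bit m i})"
    using ma le_a a_def by auto
  have ak: "a < k" using bits_lt_k[OF assms(2) mn[OF ma]] .
  have qa: "bit q j \<Longrightarrow> a + j < k" for j using nb[of "a + j"] ma bits_lt_k[OF assms(2)] by blast
  have bG: "bit (G n m) t \<longleftrightarrow> t \<le> a \<and> (bit m t \<or> \<not> bit n t)" for t
    using bit_G a_def by simp
  show "\<And>t. bit m t \<longleftrightarrow> bit (G n m) t \<and> bit n t" using bG mn le_a by blast
  show "G n m \<in> Mset (2 ^ k - 1)"
  proof (rule FD[OF ak])
    show "\<And>t. bit (G n m) t \<Longrightarrow> t \<le> a" using bG by blast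
    show "bit (G n m) 0" using bG m0 by simp
    fix t assume tk: "t < k"
    show "\<exists>i j. bit (G n m) i \<and> j \<le> k - 1 - a \<and> t = i + j"
    proof (cases "a < t")
      case True
      then show ?thesis using bG ma tk by (intro exI[of _ a] exI[of _ "t - a"]) auto
    next
      case False
      show ?thesis
      proof (cases "bit n t")
        case True
        then obtain i j where "bit m i" "bit q j" "t = i + j" using nb by blast
        moreover have "a + j < k" using qa \<open>bit q j\<close> by blast
        ultimately show ?thesis using bG le_a by (intro exI[of _ i] exI[of _ j]) auto
      next
        case nt: False
        then show ?thesis using bG False by (intro exI[of _ t] exI[of _ 0]) auto
      qed
    qed
  qed
qed

theorem mainTheorem4:
  fixes k :: nat
  assumes "k \<ge> 1"
  shows "\<forall>n::nat. odd n \<and> 2 ^ (k - 1) \<le> n \<and> n < 2 ^ k \<and> n \<noteq> 2 ^ k - 1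
           \<longrightarrow> d2 n < d2 (2 ^ k - 1)"
proof (intro allI impI)
  fix n :: nat
  assume H: "odd n \<and> 2 ^ (k - 1) \<le> n \<and> n < 2 ^ k \<and> n \<noteq> 2 ^ k - 1"
  then have on: "odd n" and nk: "n < 2 ^ k" and nF: "n \<noteq> 2 ^ k - 1" by auto
  define F :: nat where "F = 2 ^ k - 1"
  have inj: "inj_on (G n) (Mset n)"
  proof (rule inj_onI)
    fix x y assume "x \<in> Mset n" "y \<in> Mset n" "G n x = G n y"
    then have "bit x t = bit y t" for t
      using per_m(2)[OF on nk \<open>x \<in> Mset n\<close>, of t] per_m(2)[OF on nk \<open>y \<in> Mset n\<close>, of t] by simp
    then show "x = y" by (intro bit_eqI) simp
  qed
  have sub: "G n ` Mset n \<subseteq> Mset F" using per_m(1)[OF on nk] F_def by auto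
  obtain g where gk: "g < k" and ng: "\<not> bit n g"
  proof -
    have "\<exists>g<k. \<not> bit n g"
    proof (rule ccontr)
      assume "\<not> (\<exists>g<k. \<not> bit n g)"
      then have "n = 2 ^ k - 1"
      proof (intro bit_eqI)
        fix t show "bit n t = bit ((2::nat) ^ k - 1) t"
          unfolding bit_mask_nat using bits_lt_k[OF nk, of t] \<open>\<not> (\<exists>g<k. \<not> bit n g)\<close> by blast
      qed
      then show False using nF by simp
    qed
    then show ?thesis using that by blast
  qed
  define X :: nat where "X = 2 ^ (g + 1) - 1"
  have bX: "bit X t \<longleftrightarrow> t \<le> g" for t unfolding X_def bit_mask_nat by auto
  have XM: "X \<in> Mset F" unfolding F_def
  proof (rule FD[OF gk])
    show "\<And>t. bit X t \<Longrightarrow> t \<le> g" using bX by blast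
    show "bit X 0" using bX by simp
    fix t assume "t < k"
    then show "\<exists>i j. bit X i \<and> j \<le> k - 1 - g \<and> t = i + j"
    proof (cases "t \<le> g")
      case True
      then show ?thesis using bX by (intro exI[of _ t] exI[of _ 0]) simp
    next
      case False
      then show ?thesis using bX \<open>t < k\<close> by (intro exI[of _ g] exI[of _ "t - g"]) simp
    qed
  qed
  have XnI: "X \<notin> G n ` Mset n"
  proof
    assume "X \<in> G n ` Mset n"
    then obtain m where m: "m \<in> Mset n" "X = G n m" by blast
    define a where "a = Max {i. bit m i}"
    have p3: "bit m a" "\<And>t. bit m t \<Longrightarrow> t \<le> a" using per_m(3)[OF on nk m(1)] a_def by auto
    have "bit X g" using bX by simp
    then have "g \<le> a" using m(2) bit_G[of n m g] a_def by simp
    moreover have "bit X a" using m(2) bit_G[of n m a] a_def p3 by simp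
    then have "a \<le> g" using bX by blast
    ultimately have "a = g" by simp
    then show False using per_m(2)[OF on nk m(1)] p3(1) ng by blast
  qed
  have finF: "finite (Mset F)"
  proof (rule finite_subset[of _ "{..<2^k}"])
    show "Mset F \<subseteq> {..<2 ^ k}"
    proof
      fix m assume mF: "m \<in> Mset F"
      have "odd F" unfolding F_def using assms by simp
      have "F < 2 ^ k" unfolding F_def by simp
      have "bit m t \<longleftrightarrow> bit (G F m) t \<and> bit F t" for t
        using per_m(2)[OF \<open>odd F\<close> \<open>F < 2 ^ k\<close> mF] .
      then have "bit m t \<Longrightarrow> t < k" for t using bit_mask_nat F_def by blast
      then show "m \<in> {..<2 ^ k}" using less_pow_if by blast
    qed
  qed simp
  have "card (Mset n) = card (G n ` Mset n)" using card_image[OF inj] by simp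
  also have "\<dots> < card (Mset F)"
    by (rule psubset_card_mono[OF finF]) (use sub XM XnI in blast)
  finally show "d2 n < d2 (2 ^ k - 1)" unfolding d2_Mset F_def .
qed

end
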